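(* Let $(G,\cdot,N,\star,\odot)$ be a left bracoid (a left skew bracoid with $(N,\star)$ abelian) and $(H,\circ)$ a group. Assume (a) $\boxdot$ is a transitive right action of $(H,\circ)$ on $N$ such that $g\odot(\eta\boxdot h)=(g\odot\eta)\boxdot h$ for all $g\in G$, $h\in H$, $\eta\in N$; and (b) ${}^{\alpha(g)}(\eta^{\beta(h)})=({}^{\alpha(g)}\eta)^{\beta(h)}$ for all $g\in G$, $h\in H$, $\eta\in N$. Then for all $\eta\in N$ and $h\in H$: (1) $\overline{\eta}^{\beta(h)}=\overline{\eta^{\beta(h)}}$; (2) $\overline{\eta}\boxdot h=(e_N\boxdot h)\star(e_N\boxdot h)\star\overline{(\eta\boxdot h)}$.
   Context: For a group $(N,\star)$, $e_N$ denotes its identity and $\overline{\eta}$ the inverse of $\eta$. A left skew bracoid is $(G,\cdot,N,\star,\odot)$ with $(G,\cdot),(N,\star)$ groups and $\odot$ a transitive left action of $G$ on $N$ with $g\odot(\mu\star\eta)=(g\odot\mu)\star\overline{(g\odot e_N)}\star(g\odot\eta)$ for all $g\in G$, $\mu,\eta\in N$. For $g\in G$, ${}^{\alpha(g)}\eta=\overline{(g\odot e_N)}\star(g\odot\eta)\star\overline{\eta}$. For $h\in H$, $\eta^{\beta(h)}=\overline{\eta}\star(\eta\boxdot h)\star\overline{(e_N\boxdot h)}$. *)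

theory Defs
  imports "HOL-Algebra.Group"
begin

definition transitive_left_action ::
  "('g, 'a) monoid_scheme \<Rightarrow> ('n, 'b) monoid_scheme \<Rightarrow> ('g \<Rightarrow> 'n \<Rightarrow> 'n) \<Rightarrow> bool" where
  "transitive_left_action G N act \<longleftrightarrow>
     (\<forall>g\<in>carrier G. \<forall>\<eta>\<in>carrier N. act g \<eta> \<in> carrier N) \<and>
     (\<forall>\<eta>\<in>carrier N. act \<one>\<^bsub>G\<^esub> \<eta> = \<eta>) \<and>
     (\<forall>g\<in>carrier G. \<forall>g'\<in>carrier G. \<forall>\<eta>\<in>carrier N.
        act (g \<otimes>\<^bsub>G\<^esub> g') \<eta> = act g (act g' \<eta>)) \<and>
     (\<forall>\<mu>\<in>carrier N. \<forall>\<eta>\<in>carrier N. \<exists>g\<in>carrier G. act g \<mu> = \<eta>)"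

definition transitive_right_action ::
  "('h, 'a) monoid_scheme \<Rightarrow> ('n, 'b) monoid_scheme \<Rightarrow> ('n \<Rightarrow> 'h \<Rightarrow> 'n) \<Rightarrow> bool" where
  "transitive_right_action H N ract \<longleftrightarrow>
     (\<forall>h\<in>carrier H. \<forall>\<eta>\<in>carrier N. ract \<eta> h \<in> carrier N) \<and>
     (\<forall>\<eta>\<in>carrier N. ract \<eta> \<one>\<^bsub>H\<^esub> = \<eta>) \<and>
     (\<forall>h\<in>carrier H. \<forall>h'\<in>carrier H. \<forall>\<eta>\<in>carrier N.
        ract \<eta> (h \<otimes>\<^bsub>H\<^esub> h') = ract (ract \<eta> h) h') \<and>
     (\<forall>\<mu>\<in>carrier N. \<forall>\<eta>\<in>carrier N. \<exists>h\<in>carrier H. ract \<mu> h = \<eta>)"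

definition left_skew_bracoid ::
  "('g, 'a) monoid_scheme \<Rightarrow> ('n, 'b) monoid_scheme \<Rightarrow> ('g \<Rightarrow> 'n \<Rightarrow> 'n) \<Rightarrow> bool" where
  "left_skew_bracoid G N act \<longleftrightarrow>
     group G \<and> group N \<and> transitive_left_action G N act \<and>
     (\<forall>g\<in>carrier G. \<forall>\<mu>\<in>carrier N. \<forall>\<eta>\<in>carrier N.
        act g (\<mu> \<otimes>\<^bsub>N\<^esub> \<eta>) =
          act g \<mu> \<otimes>\<^bsub>N\<^esub> inv\<^bsub>N\<^esub> (act g \<one>\<^bsub>N\<^esub>) \<otimes>\<^bsub>N\<^esub> act g \<eta>)"

definition left_bracoid ::
  "('g, 'a) monoid_scheme \<Rightarrow> ('n, 'b) monoid_scheme \<Rightarrow> ('g \<Rightarrow> 'n \<Rightarrow> 'n) \<Rightarrow> bool" where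
  "left_bracoid G N act \<longleftrightarrow> left_skew_bracoid G N act \<and> comm_group N"

definition alpha_act ::
  "('n, 'b) monoid_scheme \<Rightarrow> ('g \<Rightarrow> 'n \<Rightarrow> 'n) \<Rightarrow> 'g \<Rightarrow> 'n \<Rightarrow> 'n" where
  "alpha_act N act g \<eta> =
     inv\<^bsub>N\<^esub> (act g \<one>\<^bsub>N\<^esub>) \<otimes>\<^bsub>N\<^esub> act g \<eta> \<otimes>\<^bsub>N\<^esub> inv\<^bsub>N\<^esub> \<eta>"

definition beta_act ::
  "('n, 'b) monoid_scheme \<Rightarrow> ('n \<Rightarrow> 'h \<Rightarrow> 'n) \<Rightarrow> 'h \<Rightarrow> 'n \<Rightarrow> 'n" where
  "beta_act N ract h \<eta> =
     inv\<^bsub>N\<^esub> \<eta> \<otimes>\<^bsub>N\<^esub> ract \<eta> h \<otimes>\<^bsub>N\<^esub> inv\<^bsub>N\<^esub> (ract \<one>\<^bsub>N\<^esub> h)"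

end

theory Submission
  imports Defs
begin

lemma (in comm_group) core:
  assumes c: "e \<in> carrier G" "P \<in> carrier G" "Q \<in> carrier G" "R \<in> carrier G" "t \<in> carrier G" "S \<in> carrier G"
  and key: "inv e \<otimes> ((P \<otimes> inv e \<otimes> S) \<otimes> inv e \<otimes> (e \<otimes> e \<otimes> inv R)) \<otimes> inv ((e \<otimes> Q) \<otimes> inv t)
     = inv (e \<otimes> e \<otimes> inv P) \<otimes> S \<otimes> inv t"
  shows "Q = t \<otimes> t \<otimes> inv R"
proof -
  have x1: "P \<otimes> inv e \<otimes> S \<otimes> inv e \<otimes> (e \<otimes> e \<otimes> inv R) = (P \<otimes> S \<otimes> inv R) \<otimes> ((inv e \<otimes> e) \<otimes> (inv e \<otimes> e))"
    using c by (simp only: m_ac m_closed inv_closed)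
  have x2: "inv e \<otimes> ((P \<otimes> inv e \<otimes> S) \<otimes> inv e \<otimes> (e \<otimes> e \<otimes> inv R)) \<otimes> inv ((e \<otimes> Q) \<otimes> inv t)
     = inv e \<otimes> (P \<otimes> S \<otimes> inv R) \<otimes> inv ((e \<otimes> Q) \<otimes> inv t)"
    using c x1 by simp
  have "inv e \<otimes> ((P \<otimes> inv e \<otimes> S) \<otimes> inv e \<otimes> (e \<otimes> e \<otimes> inv R)) \<otimes> inv ((e \<otimes> Q) \<otimes> inv t)
     = (P \<otimes> S) \<otimes> (inv e \<otimes> inv e \<otimes> inv R \<otimes> inv Q \<otimes> t)"
    unfolding x2 using c by (simp add: inv_mult m_ac)
  moreover have "inv (e \<otimes> e \<otimes> inv P) \<otimes> S \<otimes> inv t = (P \<otimes> S) \<otimes> (inv e \<otimes> inv e \<otimes> inv t)"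
    using c by (simp add: inv_mult m_ac)
  ultimately have "inv e \<otimes> inv e \<otimes> inv R \<otimes> inv Q \<otimes> t = inv e \<otimes> inv e \<otimes> inv t"
    using key c by simp
  hence "(inv e \<otimes> inv e) \<otimes> (inv R \<otimes> inv Q \<otimes> t) = (inv e \<otimes> inv e) \<otimes> inv t"
    using c by (simp add: m_assoc)
  hence "inv R \<otimes> inv Q \<otimes> t = inv t" using c by simp
  hence "inv Q \<otimes> (inv R \<otimes> t) = inv t" using c by (simp add: m_ac)
  hence "inv Q = inv t \<otimes> inv (inv R \<otimes> t)" using c by (metis inv_solve_right inv_closed m_closed)
  hence "inv (inv Q) = inv (inv t \<otimes> inv (inv R \<otimes> t))" by simp
  thus ?thesis using c by (simp add: inv_mult m_ac)
qed


theorem proposition3p5: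
  fixes G :: "('g, 'a) monoid_scheme" and N :: "('n, 'b) monoid_scheme"
    and H :: "('h, 'c) monoid_scheme"
    and act :: "'g \<Rightarrow> 'n \<Rightarrow> 'n" and ract :: "'n \<Rightarrow> 'h \<Rightarrow> 'n"
  assumes bracoid: "left_bracoid G N act"
    and grpH: "group H"
    and ract: "transitive_right_action H N ract"
    and commute: "\<forall>g\<in>carrier G. \<forall>h\<in>carrier H. \<forall>\<eta>\<in>carrier N.
                    act g (ract \<eta> h) = ract (act g \<eta>) h"
    and ab: "\<forall>g\<in>carrier G. \<forall>h\<in>carrier H. \<forall>\<eta>\<in>carrier N.
               alpha_act N act g (beta_act N ract h \<eta>) =
               beta_act N ract h (alpha_act N act g \<eta>)"
  shows "\<forall>\<eta>\<in>carrier N. \<forall>h\<in>carrier H.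
           beta_act N ract h (inv\<^bsub>N\<^esub> \<eta>) = inv\<^bsub>N\<^esub> (beta_act N ract h \<eta>) \<and>
           ract (inv\<^bsub>N\<^esub> \<eta>) h =
             ract \<one>\<^bsub>N\<^esub> h \<otimes>\<^bsub>N\<^esub> ract \<one>\<^bsub>N\<^esub> h \<otimes>\<^bsub>N\<^esub> inv\<^bsub>N\<^esub> (ract \<eta> h)"
proof (intro ballI)
  fix \<eta> h assume eN: "\<eta> \<in> carrier N" and hH: "h \<in> carrier H"
  have sk: "left_skew_bracoid G N act" and cN: "comm_group N"
    using bracoid unfolding left_bracoid_def by auto
  interpret N: comm_group N by (rule cN)
  have tla: "transitive_left_action G N act" and
    aff: "\<forall>g\<in>carrier G. \<forall>\<mu>\<in>carrier N. \<forall>\<eta>\<in>carrier N.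
        act g (\<mu> \<otimes>\<^bsub>N\<^esub> \<eta>) =
          act g \<mu> \<otimes>\<^bsub>N\<^esub> inv\<^bsub>N\<^esub> (act g \<one>\<^bsub>N\<^esub>) \<otimes>\<^bsub>N\<^esub> act g \<eta>"
    using sk unfolding left_skew_bracoid_def by auto
  have actc: "\<And>g x. g \<in> carrier G \<Longrightarrow> x \<in> carrier N \<Longrightarrow> act g x \<in> carrier N"
    using tla unfolding transitive_left_action_def by auto
  have ractc: "\<And>x. x \<in> carrier N \<Longrightarrow> ract x h \<in> carrier N"
    using ract hH unfolding transitive_right_action_def by auto
  obtain g where gG: "g \<in> carrier G" and g0: "act g \<one>\<^bsub>N\<^esub> = \<eta>"
    using tla eN unfolding transitive_left_action_def by blast
  define P where "P = act g \<eta>"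
  define Q where "Q = ract (inv\<^bsub>N\<^esub> \<eta>) h"
  define R where "R = ract \<eta> h"
  define t where "t = ract \<one>\<^bsub>N\<^esub> h"
  define m where "m = act g (inv\<^bsub>N\<^esub> \<eta>)"
  define A where "A = act g (inv\<^bsub>N\<^esub> t)"
  define S where "S = ract m h"
  have Pc: "P \<in> carrier N" unfolding P_def using actc gG eN by simp
  have Qc: "Q \<in> carrier N" unfolding Q_def using ractc eN by simp
  have Rc: "R \<in> carrier N" unfolding R_def using ractc eN by simp
  have tc: "t \<in> carrier N" unfolding t_def using ractc by simp
  have mc: "m \<in> carrier N" unfolding m_def using actc gG eN by simp
  have Ac: "A \<in> carrier N" unfolding A_def using actc gG tc by simp
  have Sc: "S \<in> carrier N" unfolding S_def using ractc mc by simp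
  have hm0: "\<eta> = P \<otimes>\<^bsub>N\<^esub> inv\<^bsub>N\<^esub> \<eta> \<otimes>\<^bsub>N\<^esub> m"
    using aff[rule_format, OF gG eN N.inv_closed[OF eN]] eN g0 unfolding P_def m_def by simp
  have mval: "m = \<eta> \<otimes>\<^bsub>N\<^esub> \<eta> \<otimes>\<^bsub>N\<^esub> inv\<^bsub>N\<^esub> P"
  proof -
    have "P \<otimes>\<^bsub>N\<^esub> (inv\<^bsub>N\<^esub> \<eta> \<otimes>\<^bsub>N\<^esub> m) = \<eta>" using hm0 eN Pc mc by (simp add: N.m_assoc)
    hence "inv\<^bsub>N\<^esub> \<eta> \<otimes>\<^bsub>N\<^esub> m = inv\<^bsub>N\<^esub> P \<otimes>\<^bsub>N\<^esub> \<eta>"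
      using eN Pc mc by (metis N.inv_closed N.inv_solve_left N.m_closed)
    hence "m = inv\<^bsub>N\<^esub> (inv\<^bsub>N\<^esub> \<eta>) \<otimes>\<^bsub>N\<^esub> (inv\<^bsub>N\<^esub> P \<otimes>\<^bsub>N\<^esub> \<eta>)"
      using eN Pc mc by (metis N.inv_closed N.inv_solve_left N.m_closed)
    thus ?thesis using eN Pc by (simp add: N.m_ac)
  qed
  have gt: "act g t = R" unfolding t_def R_def
    using commute[rule_format, OF gG hH N.one_closed] g0 by simp
  have hA0: "\<eta> = R \<otimes>\<^bsub>N\<^esub> inv\<^bsub>N\<^esub> \<eta> \<otimes>\<^bsub>N\<^esub> A"
    using aff[rule_format, OF gG tc N.inv_closed[OF tc]] tc g0 gt unfolding A_def by simp
  have Aval: "A = \<eta> \<otimes>\<^bsub>N\<^esub> \<eta> \<otimes>\<^bsub>N\<^esub> inv\<^bsub>N\<^esub> R"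
  proof -
    have "R \<otimes>\<^bsub>N\<^esub> (inv\<^bsub>N\<^esub> \<eta> \<otimes>\<^bsub>N\<^esub> A) = \<eta>" using hA0 eN Rc Ac by (simp add: N.m_assoc)
    hence "inv\<^bsub>N\<^esub> \<eta> \<otimes>\<^bsub>N\<^esub> A = inv\<^bsub>N\<^esub> R \<otimes>\<^bsub>N\<^esub> \<eta>"
      using eN Rc Ac by (metis N.inv_closed N.inv_solve_left N.m_closed)
    hence "A = inv\<^bsub>N\<^esub> (inv\<^bsub>N\<^esub> \<eta>) \<otimes>\<^bsub>N\<^esub> (inv\<^bsub>N\<^esub> R \<otimes>\<^bsub>N\<^esub> \<eta>)"
      using eN Rc Ac by (metis N.inv_closed N.inv_solve_left N.m_closed)
    thus ?thesis using eN Rc by (simp add: N.m_ac)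
  qed
  have gQ: "act g Q = S" unfolding Q_def S_def m_def
    using commute[rule_format, OF gG hH N.inv_closed[OF eN]] by simp
  have alm: "alpha_act N act g (inv\<^bsub>N\<^esub> \<eta>) = m"
    unfolding alpha_act_def g0 m_def[symmetric]
  proof -
    have "inv\<^bsub>N\<^esub> \<eta> \<otimes>\<^bsub>N\<^esub> (m \<otimes>\<^bsub>N\<^esub> \<eta>) = m \<otimes>\<^bsub>N\<^esub> (inv\<^bsub>N\<^esub> \<eta> \<otimes>\<^bsub>N\<^esub> \<eta>)"
      using N.m_lcomm[of "inv\<^bsub>N\<^esub> \<eta>" m \<eta>] eN mc by simp
    thus "inv\<^bsub>N\<^esub> \<eta> \<otimes>\<^bsub>N\<^esub> m \<otimes>\<^bsub>N\<^esub> inv\<^bsub>N\<^esub> (inv\<^bsub>N\<^esub> \<eta>) = m"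
      using eN mc by (simp add: N.m_assoc)
  qed
  have beta_inv: "beta_act N ract h (inv\<^bsub>N\<^esub> \<eta>) = \<eta> \<otimes>\<^bsub>N\<^esub> Q \<otimes>\<^bsub>N\<^esub> inv\<^bsub>N\<^esub> t"
    unfolding beta_act_def Q_def t_def using eN by simp
  have gb: "act g (\<eta> \<otimes>\<^bsub>N\<^esub> Q \<otimes>\<^bsub>N\<^esub> inv\<^bsub>N\<^esub> t) = (P \<otimes>\<^bsub>N\<^esub> inv\<^bsub>N\<^esub> \<eta> \<otimes>\<^bsub>N\<^esub> S) \<otimes>\<^bsub>N\<^esub> inv\<^bsub>N\<^esub> \<eta> \<otimes>\<^bsub>N\<^esub> A"
    using aff[rule_format, OF gG N.m_closed[OF eN Qc] N.inv_closed[OF tc]]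
      aff[rule_format, OF gG eN Qc] g0 gQ unfolding P_def A_def by simp
  have key: "inv\<^bsub>N\<^esub> \<eta> \<otimes>\<^bsub>N\<^esub> ((P \<otimes>\<^bsub>N\<^esub> inv\<^bsub>N\<^esub> \<eta> \<otimes>\<^bsub>N\<^esub> S) \<otimes>\<^bsub>N\<^esub> inv\<^bsub>N\<^esub> \<eta> \<otimes>\<^bsub>N\<^esub> A) \<otimes>\<^bsub>N\<^esub> inv\<^bsub>N\<^esub> ((\<eta> \<otimes>\<^bsub>N\<^esub> Q) \<otimes>\<^bsub>N\<^esub> inv\<^bsub>N\<^esub> t)
     = inv\<^bsub>N\<^esub> m \<otimes>\<^bsub>N\<^esub> S \<otimes>\<^bsub>N\<^esub> inv\<^bsub>N\<^esub> t"
    using ab[rule_format, OF gG hH N.inv_closed[OF eN]]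
    unfolding alm beta_inv unfolding alpha_act_def g0 gb
    unfolding beta_act_def S_def t_def by simp
  have Qval: "Q = t \<otimes>\<^bsub>N\<^esub> t \<otimes>\<^bsub>N\<^esub> inv\<^bsub>N\<^esub> R"
    by (rule N.core[OF eN Pc Qc Rc tc Sc key[unfolded Aval mval]])
  show "beta_act N ract h (inv\<^bsub>N\<^esub> \<eta>) = inv\<^bsub>N\<^esub> (beta_act N ract h \<eta>) \<and>
           ract (inv\<^bsub>N\<^esub> \<eta>) h =
             ract \<one>\<^bsub>N\<^esub> h \<otimes>\<^bsub>N\<^esub> ract \<one>\<^bsub>N\<^esub> h \<otimes>\<^bsub>N\<^esub> inv\<^bsub>N\<^esub> (ract \<eta> h)"
  proof
    have "\<eta> \<otimes>\<^bsub>N\<^esub> (t \<otimes>\<^bsub>N\<^esub> t \<otimes>\<^bsub>N\<^esub> inv\<^bsub>N\<^esub> R) \<otimes>\<^bsub>N\<^esub> inv\<^bsub>N\<^esub> t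
        = (\<eta> \<otimes>\<^bsub>N\<^esub> t \<otimes>\<^bsub>N\<^esub> inv\<^bsub>N\<^esub> R) \<otimes>\<^bsub>N\<^esub> (t \<otimes>\<^bsub>N\<^esub> inv\<^bsub>N\<^esub> t)"
      using eN tc Rc by (simp only: N.m_ac N.m_closed N.inv_closed)
    also have "\<dots> = inv\<^bsub>N\<^esub> (inv\<^bsub>N\<^esub> \<eta> \<otimes>\<^bsub>N\<^esub> R \<otimes>\<^bsub>N\<^esub> inv\<^bsub>N\<^esub> t)"
      using eN tc Rc by (simp add: N.inv_mult N.m_ac)
    finally show "beta_act N ract h (inv\<^bsub>N\<^esub> \<eta>) = inv\<^bsub>N\<^esub> (beta_act N ract h \<eta>)"
      unfolding beta_inv Qval unfolding beta_act_def R_def t_def .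
    show "ract (inv\<^bsub>N\<^esub> \<eta>) h =
             ract \<one>\<^bsub>N\<^esub> h \<otimes>\<^bsub>N\<^esub> ract \<one>\<^bsub>N\<^esub> h \<otimes>\<^bsub>N\<^esub> inv\<^bsub>N\<^esub> (ract \<eta> h)"
      using Qval unfolding Q_def t_def R_def .
  qed
qed
end
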